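(* Let $V$ be a finite-dimensional real inner product space with unit sphere $S$, let $M\subset V$ be a lattice with $M\otimes_{\mathbf Z}\mathbf R=V$ such that the inner product takes integral values on $M\times M$, let $\sigma\subset V$ be a rational polyhedral cone with respect to $M$, and let $f:V\to\mathbf R$ be a linear functional taking integral values on $M$. If $f$ takes a negative value on $\sigma$ and attains its minimum on $S\cap\sigma$ at $s$, then the ray $\mathbf R_{>0}\cdot s$ contains a unique nonzero indivisible lattice point of $M$.
   Context: A polyhedral cone is a finite intersection of half-spaces $\{g\ge0\}$ with $g$ linear; it is rational with respect to $M$ if it can be cut out by half-spaces defined by linear functionals taking integral values on $M$. A lattice point $m\in M$ is indivisible if $m=Nm'$ with $N\in\mathbf N$, $m'\in M$ implies $N=1$. *)

theory Defs
  imports "HOL-Analysis.Analysis"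
begin

text \<open>A full-rank lattice in V: the set of integral linear combinations of a basis of V
  (equivalently a discrete subgroup M with M tensor R = V).\<close>
definition full_lattice :: "'a::euclidean_space set \<Rightarrow> bool" where
  "full_lattice M \<longleftrightarrow> (\<exists>B. independent B \<and> span B = UNIV \<and>
      M = {x. \<exists>c::'a \<Rightarrow> int. x = (\<Sum>b\<in>B. of_int (c b) *\<^sub>R b)})"

definition integral_on :: "('a \<Rightarrow> real) \<Rightarrow> 'a set \<Rightarrow> bool" where
  "integral_on g M \<longleftrightarrow> (\<forall>m\<in>M. g m \<in> \<int>)"

definition rational_polyhedral_cone :: "'a::euclidean_space set \<Rightarrow> 'a set \<Rightarrow> bool" where
  "rational_polyhedral_cone M \<sigma> \<longleftrightarrow> (\<exists>G. finite G \<and> (\<forall>g\<in>G. linear g \<and> integral_on g M) \<and>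
      \<sigma> = {x. \<forall>g\<in>G. g x \<ge> 0})"

definition indivisible :: "'a::real_vector set \<Rightarrow> 'a \<Rightarrow> bool" where
  "indivisible M m \<longleftrightarrow> (\<forall>(N::nat) m'. m' \<in> M \<and> m = of_nat N *\<^sub>R m' \<longrightarrow> N = 1)"

end

theory Submission
  imports Defs
begin


definition qv :: "'a::euclidean_space set \<Rightarrow> 'a set" where
  "qv B = {x. \<exists>c. (\<forall>b\<in>B. c b \<in> \<rat>) \<and> x = (\<Sum>b\<in>B. c b *\<^sub>R b)}"

definition zv :: "'a::euclidean_space set \<Rightarrow> 'a set" where
  "zv B = {x. \<exists>c::'a \<Rightarrow> int. x = (\<Sum>b\<in>B. of_int (c b) *\<^sub>R b)}"

lemma qv_zero: "0 \<in> qv B"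
  unfolding qv_def by (rule CollectI, rule exI[of _ "\<lambda>_. 0"]) auto

lemma qv_add: "x \<in> qv B \<Longrightarrow> y \<in> qv B \<Longrightarrow> x + y \<in> qv B"
  unfolding qv_def
  apply clarify
  subgoal for c d by (rule exI[of _ "\<lambda>b. c b + d b"]) (auto simp: sum.distrib scaleR_add_left)
  done

lemma qv_scale: "x \<in> qv B \<Longrightarrow> r \<in> \<rat> \<Longrightarrow> r *\<^sub>R x \<in> qv B"
  unfolding qv_def
  apply clarify
  subgoal for c by (rule exI[of _ "\<lambda>b. r * c b"]) (auto simp: scaleR_sum_right)
  done

lemma qv_neg: "x \<in> qv B \<Longrightarrow> - x \<in> qv B"
  using qv_scale[of x B "-1"] by simp

lemma qv_diff: "x \<in> qv B \<Longrightarrow> y \<in> qv B \<Longrightarrow> x - y \<in> qv B"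
  using qv_add[OF _ qv_neg] by (metis diff_conv_add_uminus)

lemma qv_sum: "(\<And>i. i \<in> I \<Longrightarrow> h i \<in> qv B) \<Longrightarrow> sum h I \<in> qv B"
  by (induction I rule: infinite_finite_induct) (auto simp: qv_zero qv_add)

lemma zv_qv: "x \<in> zv B \<Longrightarrow> x \<in> qv B"
proof -
  assume "x \<in> zv B"
  then obtain c :: "'a \<Rightarrow> int" where "x = (\<Sum>b\<in>B. of_int (c b) *\<^sub>R b)" unfolding zv_def by auto
  thus ?thesis unfolding qv_def by (intro CollectI exI[of _ "\<lambda>b. real_of_int (c b)"]) auto
qed

lemma zv_basis: "finite B \<Longrightarrow> b \<in> B \<Longrightarrow> b \<in> zv B"
  unfolding zv_def
  by (rule CollectI, rule exI[of _ "\<lambda>x. if x = b then 1 else 0"])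
     (simp add: sum.delta if_distrib[of real_of_int] if_distrib[of "\<lambda>r. r *\<^sub>R _"] cong: if_cong)

lemma zv_diff: "x \<in> zv B \<Longrightarrow> y \<in> zv B \<Longrightarrow> x - y \<in> zv B"
  unfolding zv_def
  apply clarify
  subgoal for c d by (rule exI[of _ "\<lambda>b. c b - d b"]) (auto simp: sum_subtractf scaleR_diff_left)
  done

lemma zv_scale: "x \<in> zv B \<Longrightarrow> of_int k *\<^sub>R x \<in> zv B"
  unfolding zv_def
  apply clarify
  subgoal for c by (rule exI[of _ "\<lambda>b. k * c b"]) (auto simp: scaleR_sum_right)
  done

lemma qv_lin:
  fixes g :: "'a::euclidean_space \<Rightarrow> real"
  assumes "linear g" "\<forall>b\<in>B. g b \<in> \<rat>" "x \<in> qv B"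
  shows "g x \<in> \<rat>"
proof -
  obtain c where c: "\<forall>b\<in>B. c b \<in> \<rat>" "x = (\<Sum>b\<in>B. c b *\<^sub>R b)" using assms(3) unfolding qv_def by auto
  have "g x = (\<Sum>b\<in>B. c b * g b)" using c(2) assms(1) by (simp add: linear_sum linear_scale)
  also have "\<dots> \<in> \<rat>" using c(1) assms(2) by auto
  finally show ?thesis .
qed

lemma qv_inner:
  assumes "\<forall>b\<in>B. \<forall>b'\<in>B. b \<bullet> b' \<in> \<rat>" "x \<in> qv B" "y \<in> qv B"
  shows "x \<bullet> y \<in> \<rat>"
proof -
  have "\<forall>b\<in>B. b \<bullet> y \<in> \<rat>"
  proof
    fix b assume "b \<in> B"
    show "b \<bullet> y \<in> \<rat>"
      by (rule qv_lin[OF _ _ assms(3)]) (use \<open>b \<in> B\<close> assms(1) in \<open>auto intro: bounded_linear.linear bounded_linear_inner_right\<close>)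
  qed
  thus ?thesis
    by (intro qv_lin[OF _ _ assms(2)]) (auto intro: bounded_linear.linear bounded_linear_inner_left)
qed

lemma rat_denom: "r \<in> \<rat> \<Longrightarrow> \<exists>D::nat. D > 0 \<and> real D * r \<in> \<int>"
proof -
  assume "r \<in> \<rat>"
  then obtain a b where ab: "b > 0" "r = of_int a / of_int b" by (rule Rats_cases')
  show ?thesis
    by (rule exI[of _ "nat b"]) (use ab in auto)
qed

lemma qv_denom:
  assumes "finite B" "x \<in> qv B"
  shows "\<exists>D::nat. D > 0 \<and> real D *\<^sub>R x \<in> zv B"
proof -
  obtain c where c: "\<forall>b\<in>B. c b \<in> \<rat>" "x = (\<Sum>b\<in>B. c b *\<^sub>R b)" using assms(2) unfolding qv_def by auto
  have "\<forall>b\<in>B. \<exists>D::nat. D > 0 \<and> real D * c b \<in> \<int>" using c(1) rat_denom by blast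
  then obtain d where d: "\<forall>b\<in>B. d b > (0::nat) \<and> real (d b) * c b \<in> \<int>" by metis
  define D where "D = (\<Prod>b\<in>B. d b)"
  have Dpos: "D > 0" unfolding D_def using d by (simp add: prod_pos)
  have "\<forall>b\<in>B. real D * c b \<in> \<int>"
  proof
    fix b assume b: "b \<in> B"
    have "D = d b * (\<Prod>b'\<in>B - {b}. d b')" unfolding D_def using assms(1) b by (simp add: prod.remove)
    hence "real D * c b = real (\<Prod>b'\<in>B - {b}. d b') * (real (d b) * c b)" by simp
    also have "\<dots> \<in> \<int>" using d b by (metis Ints_mult Ints_of_nat)
    finally show "real D * c b \<in> \<int>" .
  qed
  then have "\<forall>b\<in>B. \<exists>k::int. real D * c b = of_int k" by (meson Ints_cases)
  then obtain k where k: "\<forall>b\<in>B. real D * c b = of_int (k b)" by metis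
  have "real D *\<^sub>R x = (\<Sum>b\<in>B. of_int (k b) *\<^sub>R b)"
    using c(2) k by (simp add: scaleR_sum_right)
  thus ?thesis using Dpos unfolding zv_def by blast
qed



lemma span_insert_cong: "span S = span T \<Longrightarrow> span (insert a S) = span (insert a T)"
  by (auto simp: span_breakdown_eq)

lemma span_sub_iff: "A \<subseteq> span B \<Longrightarrow> span A \<subseteq> span B"
  by (simp add: span_minimal)

lemma gs:
  fixes T :: "'a::euclidean_space set"
  assumes "finite T" "T \<subseteq> qv B" "\<forall>b\<in>B. \<forall>b'\<in>B. b \<bullet> b' \<in> \<rat>"
  shows "\<exists>E. finite E \<and> E \<subseteq> qv B \<and> 0 \<notin> E \<and> pairwise orthogonal E \<and> span E = span T"
  using assms(1,2)
proof (induction T rule: finite_induct)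
  case empty
  show ?case by (rule exI[of _ "{}"]) auto
next
  case (insert v T)
  then obtain E where E: "finite E" "E \<subseteq> qv B" "0 \<notin> E" "pairwise orthogonal E" "span E = span T"
    by auto
  define v' where "v' = v - (\<Sum>e\<in>E. (e \<bullet> v / (e \<bullet> e)) *\<^sub>R e)"
  have orth: "orthogonal x v'" if "x \<in> span E" for x
    unfolding v'_def by (rule Gram_Schmidt_step[OF E(4) that])
  have vq: "v \<in> qv B" using insert by auto
  have sq: "(\<Sum>e\<in>E. (e \<bullet> v / (e \<bullet> e)) *\<^sub>R e) \<in> qv B"
  proof (intro qv_sum qv_scale)
    fix e assume "e \<in> E"
    then have "e \<in> qv B" using E(2) by auto
    then show "e \<in> qv B" "e \<bullet> v / (e \<bullet> e) \<in> \<rat>"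
      using qv_inner[OF assms(3)] vq by (auto intro!: Rats_divide)
  qed
  have v'q: "v' \<in> qv B" unfolding v'_def using vq sq by (rule qv_diff)
  have sspan: "(\<Sum>e\<in>E. (e \<bullet> v / (e \<bullet> e)) *\<^sub>R e) \<in> span E"
    by (intro span_sum span_scale span_base)
  show ?case
  proof (cases "v' = 0")
    case True
    then have "v \<in> span E" using sspan unfolding v'_def by simp
    then have "v \<in> span T" using E(5) by simp
    then have "span (insert v T) = span T" by (rule span_redundant)
    then show ?thesis using E by auto
  next
    case False
    have "span (insert v' E) = span (insert v E)"
    proof
      have s1: "(\<Sum>e\<in>E. (e \<bullet> v / (e \<bullet> e)) *\<^sub>R e) \<in> span (insert v E)"
        using sspan span_mono[of E "insert v E"] by blast
      have s2: "(\<Sum>e\<in>E. (e \<bullet> v / (e \<bullet> e)) *\<^sub>R e) \<in> span (insert v' E)"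
        using sspan span_mono[of E "insert v' E"] by blast
      have "v' \<in> span (insert v E)" unfolding v'_def
        by (rule span_diff[OF span_base s1]) simp
      moreover have "E \<subseteq> span (insert v E)" by (meson span_superset subset_insertI subset_trans)
      ultimately show "span (insert v' E) \<subseteq> span (insert v E)"
        by (intro span_sub_iff) auto
      have "v = v' + (\<Sum>e\<in>E. (e \<bullet> v / (e \<bullet> e)) *\<^sub>R e)" unfolding v'_def by simp
      also have "\<dots> \<in> span (insert v' E)"
        by (rule span_add[OF span_base s2]) simp
      finally have "v \<in> span (insert v' E)" .
      moreover have "E \<subseteq> span (insert v' E)" by (meson span_superset subset_insertI subset_trans)
      ultimately show "span (insert v E) \<subseteq> span (insert v' E)"
        by (intro span_sub_iff) auto
    qed
    also have "\<dots> = span (insert v T)" using E(5) by (rule span_insert_cong)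
    finally have sp: "span (insert v' E) = span (insert v T)" .
    have po: "pairwise orthogonal (insert v' E)"
      unfolding pairwise_insert
    proof (intro conjI allI impI)
      fix y assume "y \<in> E \<and> y \<noteq> v'"
      then have "orthogonal y v'" using orth span_base by blast
      then show "orthogonal v' y" "orthogonal y v'" by (simp_all add: orthogonal_commute)
    qed (rule E(4))
    show ?thesis
      by (rule exI[of _ "insert v' E"]) (use E False v'q sp po in auto)
  qed
qed

lemma orth_expand:
  fixes E :: "'a::euclidean_space set"
  assumes "finite E" "0 \<notin> E" "pairwise orthogonal E" "x \<in> span E"
  shows "x = (\<Sum>e\<in>E. (e \<bullet> x / (e \<bullet> e)) *\<^sub>R e)"
proof -
  define d where "d = x - (\<Sum>e\<in>E. (e \<bullet> x / (e \<bullet> e)) *\<^sub>R e)"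
  have "orthogonal x' d" if "x' \<in> span E" for x'
    unfolding d_def by (rule Gram_Schmidt_step[OF assms(3) that])
  moreover have "d \<in> span E" unfolding d_def
    by (intro span_diff assms(4) span_sum span_scale span_base)
  ultimately have "orthogonal d d" by blast
  then have "d = 0" by (simp add: orthogonal_def)
  thus ?thesis unfolding d_def by simp
qed

lemma orth_sum_inner:
  fixes E :: "'a::euclidean_space set"
  assumes "finite E" "pairwise orthogonal E" "e \<in> E"
  shows "(\<Sum>e'\<in>E. (c e' / (e' \<bullet> e')) *\<^sub>R e') \<bullet> e = (if e \<bullet> e = 0 then 0 else c e)"
proof -
  have "(\<Sum>e'\<in>E. (c e' / (e' \<bullet> e')) *\<^sub>R e') \<bullet> e = (\<Sum>e'\<in>E. (c e' / (e' \<bullet> e')) * (e' \<bullet> e))"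
    by (simp add: inner_sum_left)
  also have "\<dots> = (\<Sum>e'\<in>E. if e' = e then (c e / (e \<bullet> e)) * (e \<bullet> e) else 0)"
    using assms(2,3) by (intro sum.cong) (auto simp: pairwise_def orthogonal_def)
  also have "\<dots> = (c e / (e \<bullet> e)) * (e \<bullet> e)" using assms(1,3) by simp
  finally show ?thesis by simp
qed



lemma grad_rep:
  fixes E :: "'a::euclidean_space set" and g :: "'a \<Rightarrow> real"
  assumes "finite E" "0 \<notin> E" "pairwise orthogonal E" "span E = UNIV" "linear g"
  shows "g x = (\<Sum>e\<in>E. (g e / (e \<bullet> e)) *\<^sub>R e) \<bullet> x"
proof -
  have x: "x = (\<Sum>e\<in>E. (e \<bullet> x / (e \<bullet> e)) *\<^sub>R e)"
    using orth_expand[OF assms(1-3)] assms(4) by simp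
  have "g x = (\<Sum>e\<in>E. (e \<bullet> x / (e \<bullet> e)) * g e)"
    by (subst x) (simp add: linear_sum[OF assms(5)] linear_scale[OF assms(5)])
  also have "\<dots> = (\<Sum>e\<in>E. (g e / (e \<bullet> e)) * (e \<bullet> x))"
    by (intro sum.cong) auto
  also have "\<dots> = (\<Sum>e\<in>E. (g e / (e \<bullet> e)) *\<^sub>R e) \<bullet> x"
    by (simp add: inner_sum_left)
  finally show ?thesis .
qed

lemma perturb:
  fixes f :: "'a::euclidean_space \<Rightarrow> real" and G :: "('a \<Rightarrow> real) set"
  assumes "finite G" "\<forall>g\<in>G. linear g" "linear f"
    "\<sigma> = {x. \<forall>g\<in>G. g x \<ge> 0}" "s \<in> \<sigma>" "norm s = 1" "\<forall>g\<in>G. g s = 0 \<longrightarrow> g v = 0"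
    "v \<bullet> s = 0" "f s < 0" "\<forall>x\<in>\<sigma>. f s * norm x \<le> f x"
  shows "f v = 0"
proof -
  have ev: "\<forall>\<^sub>F e in at (0::real). s + e *\<^sub>R v \<in> \<sigma>"
  proof -
    have "\<forall>g\<in>G. \<forall>\<^sub>F e in at (0::real). g (s + e *\<^sub>R v) \<ge> 0"
    proof
      fix g assume g: "g \<in> G"
      have lin: "g (s + e *\<^sub>R v) = g s + e * g v" for e
        using assms(2) g by (simp add: linear_add linear_scale)
      show "\<forall>\<^sub>F e in at (0::real). g (s + e *\<^sub>R v) \<ge> 0"
      proof (cases "g s = 0")
        case True
        then have "g v = 0" using assms(7) g by blast
        then show ?thesis using True lin by simp
      next
        case False
        then have pos: "g s > 0" using assms(4,5) g by force
        have "((\<lambda>e. g s + e * g v) \<longlongrightarrow> g s + 0 * g v) (at (0::real))"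
          by (intro tendsto_intros)
        then have "\<forall>\<^sub>F e in at (0::real). g s + e * g v > 0"
          using pos by (intro order_tendstoD(1)) auto
        then show ?thesis by eventually_elim (simp add: lin)
      qed
    qed
    then have "\<forall>\<^sub>F e in at (0::real). \<forall>g\<in>G. g (s + e *\<^sub>R v) \<ge> 0"
      by (rule eventually_ball_finite[OF assms(1)])
    then show ?thesis using assms(4) by simp
  qed
  have key: "e * f v \<ge> f s * e\<^sup>2 * (v \<bullet> v)" if "s + e *\<^sub>R v \<in> \<sigma>" for e
  proof -
    have n2: "(norm (s + e *\<^sub>R v))\<^sup>2 = 1 + e\<^sup>2 * (v \<bullet> v)"
    proof -
      have ss: "s \<bullet> s = 1" using assms(6) by (simp add: norm_eq_sqrt_inner)
      have sv: "s \<bullet> v = 0" using assms(8) by (simp add: inner_commute)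
      have "(norm (s + e *\<^sub>R v))\<^sup>2 = (s + e *\<^sub>R v) \<bullet> (s + e *\<^sub>R v)"
        by (rule power2_norm_eq_inner)
      also have "\<dots> = s \<bullet> s + 2 * e * (s \<bullet> v) + e\<^sup>2 * (v \<bullet> v)"
        by (simp add: inner_add_left inner_add_right inner_commute power2_eq_square algebra_simps)
      finally show ?thesis using ss sv by simp
    qed
    have "0 \<le> e\<^sup>2 * (v \<bullet> v)" by simp
    then have "(norm (s + e *\<^sub>R v))\<^sup>2 \<le> (1 + e\<^sup>2 * (v \<bullet> v))\<^sup>2"
      unfolding n2 by (simp add: power2_eq_square algebra_simps)
        (metis add_nonneg_nonneg mult_nonneg_nonneg zero_le_square mult.assoc)
    then have nle: "norm (s + e *\<^sub>R v) \<le> 1 + e\<^sup>2 * (v \<bullet> v)"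
      by (rule power2_le_imp_le) simp
    have "f s * (1 + e\<^sup>2 * (v \<bullet> v)) \<le> f s * norm (s + e *\<^sub>R v)"
      using nle assms(9) by (simp add: mult_left_mono_neg)
    also have "\<dots> \<le> f (s + e *\<^sub>R v)" using assms(10) that by blast
    also have "\<dots> = f s + e * f v" using assms(3) by (simp add: linear_add linear_scale)
    finally show ?thesis by (simp add: algebra_simps)
  qed
  have evR: "\<forall>\<^sub>F e in at_right (0::real). f s * e * (v \<bullet> v) \<le> f v"
  proof -
    have "\<forall>\<^sub>F e in at_right (0::real). s + e *\<^sub>R v \<in> \<sigma>" using ev eventually_at_split by blast
    then show ?thesis using eventually_at_right_less[of "0::real"]
    proof eventually_elim
      case (elim e)
      then have "e * (f s * e * (v \<bullet> v)) \<le> e * f v" using key[of e] by (simp add: power2_eq_square algebra_simps)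
      then show ?case using elim(2) by simp
    qed
  qed
  have evL: "\<forall>\<^sub>F e in at_left (0::real). f v \<le> f s * e * (v \<bullet> v)"
  proof -
    have "\<forall>\<^sub>F e in at_left (0::real). s + e *\<^sub>R v \<in> \<sigma>" using ev eventually_at_split by blast
    then show ?thesis using eventually_at_left_real[of "-1::real" 0, OF neg_less_0_iff_less[THEN iffD2, OF zero_less_one]]
    proof eventually_elim
      case (elim e)
      then have "e * (f s * e * (v \<bullet> v)) \<le> e * f v" using key[of e] by (simp add: power2_eq_square algebra_simps)
      then show ?case using elim(2) by (simp add: mult_le_cancel_left)
    qed
  qed
  have limR: "((\<lambda>e. f s * e * (v \<bullet> v)) \<longlongrightarrow> f s * 0 * (v \<bullet> v)) (at_right (0::real))"
    by (intro tendsto_intros)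
  have limL: "((\<lambda>e. f s * e * (v \<bullet> v)) \<longlongrightarrow> f s * 0 * (v \<bullet> v)) (at_left (0::real))"
    by (intro tendsto_intros)
  have "0 \<le> f v" using tendsto_le[OF _ tendsto_const limR evR] by simp
  moreover have "f v \<le> 0" using tendsto_le[OF _ limL tendsto_const evL] by simp
  ultimately show ?thesis by simp
qed



lemma coord_unique:
  fixes B :: "'a::euclidean_space set"
  assumes "finite B" "independent B" "(\<Sum>b\<in>B. c b *\<^sub>R b) = (\<Sum>b\<in>B. d b *\<^sub>R b)" "b \<in> B"
  shows "c b = d b"
proof (rule ccontr)
  assume ne: "c b \<noteq> d b"
  have "(\<Sum>b\<in>B. (c b - d b) *\<^sub>R b) = 0"
    using assms(3) by (simp add: scaleR_diff_left sum_subtractf)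
  then have "dependent B" using ne assms(4) unfolding dependent_finite[OF assms(1)]
    by (intro exI[of _ "\<lambda>b. c b - d b"]) auto
  thus False using assms(2) by simp
qed

lemma ray_unique:
  fixes B :: "'a::euclidean_space set"
  assumes fin: "finite B" and ind: "independent B" and M: "M = zv B"
    and m1: "m1 \<in> M" "m1 \<noteq> 0" "m1 = t1 *\<^sub>R s" "t1 > 0"
  shows "\<exists>!m. m \<in> M \<and> m \<noteq> 0 \<and> indivisible M m \<and> (\<exists>t>0. m = t *\<^sub>R s)"
proof -
  obtain c :: "'a \<Rightarrow> int" where c: "m1 = (\<Sum>b\<in>B. of_int (c b) *\<^sub>R b)"
    using m1(1) unfolding M zv_def by auto
  obtain b0 where b0: "b0 \<in> B" "c b0 \<noteq> 0"
    using m1(2) c by (metis (no_types, lifting) of_int_0 scale_zero_left sum.neutral)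
  have sne: "s \<noteq> 0" using m1 by auto
  define h where "h = t1 / \<bar>real_of_int (c b0)\<bar>"
  have hpos: "h > 0" unfolding h_def using b0 m1(4) by auto
  have R: "\<exists>k::nat. k > 0 \<and> t = real k * h" if t: "t > 0" "t *\<^sub>R s \<in> M" for t
  proof -
    obtain d :: "'a \<Rightarrow> int" where d: "t *\<^sub>R s = (\<Sum>b\<in>B. of_int (d b) *\<^sub>R b)"
      using t(2) unfolding M zv_def by auto
    have "t *\<^sub>R s = (t / t1) *\<^sub>R m1" using m1(3,4) by simp
    also have "\<dots> = (\<Sum>b\<in>B. (t / t1 * of_int (c b)) *\<^sub>R b)" unfolding c by (simp add: scaleR_sum_right)
    finally have "(\<Sum>b\<in>B. (t / t1 * of_int (c b)) *\<^sub>R b) = (\<Sum>b\<in>B. of_int (d b) *\<^sub>R b)"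
      using d by simp
    from coord_unique[OF fin ind this b0(1)]
    have "t / t1 * of_int (c b0) = of_int (d b0)" .
    then have "t * of_int (c b0) = t1 * of_int (d b0)" using m1(4) by (simp add: field_simps)
    then have "\<bar>t * of_int (c b0)\<bar> = \<bar>t1 * of_int (d b0)\<bar>" by simp
    then have e: "t * \<bar>of_int (c b0)\<bar> = t1 * \<bar>of_int (d b0)\<bar>" using t(1) m1(4) by (simp add: abs_mult)
    then have tk: "t = real (nat \<bar>d b0\<bar>) * h" unfolding h_def using b0(2) by (simp add: field_simps)
    have "nat \<bar>d b0\<bar> > 0" using tk t(1) hpos by (metis gr0I mult_zero_left of_nat_0 order_less_irrefl)
    thus ?thesis using tk by blast
  qed
  define P where "P k \<longleftrightarrow> k > 0 \<and> (real k * h) *\<^sub>R s \<in> M" for k :: nat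
  obtain k1 where "P k1" using R[OF m1(4)] m1 unfolding P_def by auto
  define k0 where "k0 = (LEAST k. P k)"
  have Pk0: "P k0" unfolding k0_def by (rule LeastI) fact
  have k0min: "k0 \<le> k" if "P k" for k unfolding k0_def using that by (rule Least_le)
  define m0 where "m0 = (real k0 * h) *\<^sub>R s"
  have m0M: "m0 \<in> M" using Pk0 unfolding P_def m0_def by simp
  have k0pos: "k0 > 0" using Pk0 unfolding P_def by simp
  have m0ne: "m0 \<noteq> 0" unfolding m0_def using k0pos hpos sne by simp
  have mult: "\<exists>q::nat. (real k * h) *\<^sub>R s = real q *\<^sub>R m0" if "P k" for k
  proof -
    define q where "q = k div k0"
    define r where "r = k mod k0"
    have kq: "k = q * k0 + r" unfolding q_def r_def by simp
    have "(real r * h) *\<^sub>R s = (real k * h) *\<^sub>R s - of_int (int q) *\<^sub>R m0"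
      unfolding m0_def kq by (simp add: algebra_simps)
    also have "\<dots> \<in> M" using that m0M unfolding P_def M by (intro zv_diff zv_scale) auto
    finally have rM: "(real r * h) *\<^sub>R s \<in> M" .
    have "r < k0" unfolding r_def using k0pos by simp
    then have "r = 0" using k0min[of r] rM unfolding P_def by (metis not_le not_gr0)
    then have "(real k * h) *\<^sub>R s = real q *\<^sub>R m0" unfolding m0_def kq by simp
    then show ?thesis by blast
  qed
  have indiv: "indivisible M m0"
    unfolding indivisible_def
  proof (intro allI impI, elim conjE)
    fix N :: nat and m' assume m': "m' \<in> M" "m0 = real N *\<^sub>R m'"
    have N0: "N \<noteq> 0" using m' m0ne by auto
    have "(real k0 * h / real N) *\<^sub>R s = (1 / real N) *\<^sub>R m0" unfolding m0_def by simp
    also have "\<dots> = m'" using m'(2) N0 by simp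
    finally have "m' = (real k0 * h / real N) *\<^sub>R s" by simp
    moreover have "real k0 * h / real N > 0" using k0pos hpos N0 by simp
    ultimately obtain k' where k': "k' > 0" "real k0 * h / real N = real k' * h"
      using R m'(1) by metis
    have "P k'" unfolding P_def using k' m'(1) \<open>m' = _\<close> by simp
    then have "k0 \<le> k'" by (rule k0min)
    have "real k0 = real k' * real N" using k'(2) hpos N0 by (simp add: field_simps)
    then have "k0 = k' * N" by (metis of_nat_eq_iff of_nat_mult)
    then show "N = 1" using \<open>k0 \<le> k'\<close> k0pos N0
      by (metis le_antisym mult.right_neutral mult_le_mono2 nat_mult_eq_cancel1 not_gr0 One_nat_def Suc_leI)
  qed
  show ?thesis
  proof (rule ex1I[of _ m0])
    show "m0 \<in> M \<and> m0 \<noteq> 0 \<and> indivisible M m0 \<and> (\<exists>t>0. m0 = t *\<^sub>R s)"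
      using m0M m0ne indiv k0pos hpos unfolding m0_def by auto
  next
    fix m assume m: "m \<in> M \<and> m \<noteq> 0 \<and> indivisible M m \<and> (\<exists>t>0. m = t *\<^sub>R s)"
    then obtain t where t: "t > 0" "m = t *\<^sub>R s" by auto
    obtain k where k: "k > 0" "t = real k * h" using R[OF t(1)] m t by auto
    have "P k" unfolding P_def using k m t by simp
    then obtain q where q: "m = real q *\<^sub>R m0" using mult k t by auto
    have "q = 1" using m m0M q unfolding indivisible_def by blast
    then show "m = m0" using q by simp
  qed
qed



theorem corollary2p3:
  fixes M \<sigma> :: "'a::euclidean_space set" and f :: "'a \<Rightarrow> real" and s :: 'a
  assumes "full_lattice M"
    and "\<forall>x\<in>M. \<forall>y\<in>M. x \<bullet> y \<in> \<int>"
    and "rational_polyhedral_cone M \<sigma>"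
    and "linear f" and "integral_on f M"
    and "\<exists>x\<in>\<sigma>. f x < 0"
    and "s \<in> sphere 0 1 \<inter> \<sigma>"
    and "\<forall>y\<in>sphere 0 1 \<inter> \<sigma>. f s \<le> f y"
  shows "\<exists>!m. m \<in> M \<and> m \<noteq> 0 \<and> indivisible M m \<and> (\<exists>t>0. m = t *\<^sub>R s)"
proof -
  obtain B where B: "independent B" "span B = UNIV"
    and MB: "M = {x. \<exists>c::'a \<Rightarrow> int. x = (\<Sum>b\<in>B. of_int (c b) *\<^sub>R b)}"
    using assms(1) unfolding full_lattice_def by blast
  have M: "M = zv B" using MB unfolding zv_def .
  have fin: "finite B" using B(1) by (rule finiteI_independent)
  have BM: "b \<in> M" if "b \<in> B" for b using zv_basis[OF fin that] M by simp
  have Bq: "B \<subseteq> qv B" using BM M zv_qv by blast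
  have Binner: "\<forall>b\<in>B. \<forall>b'\<in>B. b \<bullet> b' \<in> \<rat>"
    using assms(2) BM by (meson Ints_subset_Rats subsetD)
  obtain E0 where E0: "finite E0" "E0 \<subseteq> qv B" "0 \<notin> E0" "pairwise orthogonal E0" "span E0 = span B"
    using gs[OF fin Bq Binner] by blast
  have E0U: "span E0 = UNIV" using E0(5) B(2) by simp
  define grad where "grad g = (\<Sum>e\<in>E0. (g e / (e \<bullet> e)) *\<^sub>R e)" for g :: "'a \<Rightarrow> real"
  have grad_rep: "g x = grad g \<bullet> x" if "linear g" for g x
    unfolding grad_def by (rule grad_rep[OF E0(1,3,4) E0U that])
  have grad_q: "grad g \<in> qv B" if "linear g" "integral_on g M" for g
    unfolding grad_def
  proof (intro qv_sum qv_scale)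
    fix e assume e: "e \<in> E0"
    then have eq: "e \<in> qv B" using E0(2) by auto
    have "\<forall>b\<in>B. g b \<in> \<rat>" using that(2) BM unfolding integral_on_def
      by (meson Ints_subset_Rats subsetD)
    then have "g e \<in> \<rat>" by (rule qv_lin[OF that(1) _ eq])
    moreover have "e \<bullet> e \<in> \<rat>" by (rule qv_inner[OF Binner eq eq])
    ultimately show "g e / (e \<bullet> e) \<in> \<rat>" by (rule Rats_divide)
    show "e \<in> qv B" by (rule eq)
  qed
  obtain G where G: "finite G" "\<forall>g\<in>G. linear g \<and> integral_on g M" "\<sigma> = {x. \<forall>g\<in>G. g x \<ge> 0}"
    using assms(3) unfolding rational_polyhedral_cone_def by blast
  have s: "s \<in> \<sigma>" "norm s = 1" using assms(7) by auto
  have sne: "s \<noteq> 0" using s(2) by auto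
  have normalize: "(1 / norm x) *\<^sub>R x \<in> sphere 0 1 \<inter> \<sigma>" if "x \<in> \<sigma>" "x \<noteq> 0" for x
  proof -
    have "\<forall>g\<in>G. g ((1 / norm x) *\<^sub>R x) \<ge> 0"
      using G(2) that(1) G(3) by (auto simp: linear_scale)
    then show ?thesis using that G(3) by simp
  qed
  have hom: "\<forall>x\<in>\<sigma>. f s * norm x \<le> f x"
  proof
    fix x assume x: "x \<in> \<sigma>"
    show "f s * norm x \<le> f x"
    proof (cases "x = 0")
      case True then show ?thesis using assms(4) by (simp add: linear_0)
    next
      case False
      then have "f s \<le> f ((1 / norm x) *\<^sub>R x)" using assms(8) normalize[OF x] by blast
      also have "\<dots> = f x / norm x" using assms(4) by (simp add: linear_scale)
      finally show ?thesis using False by (simp add: field_simps)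
    qed
  qed
  have lneg: "f s < 0"
  proof -
    obtain x0 where x0: "x0 \<in> \<sigma>" "f x0 < 0" using assms(6) by blast
    have "x0 \<noteq> 0" using x0(2) assms(4) by (auto simp: linear_0)
    then have "f s \<le> f ((1 / norm x0) *\<^sub>R x0)" using assms(8) normalize[OF x0(1)] by blast
    also have "\<dots> = f x0 / norm x0" using assms(4) by (simp add: linear_scale)
    also have "\<dots> < 0" using x0(2) \<open>x0 \<noteq> 0\<close> by (simp add: divide_neg_pos)
    finally show ?thesis .
  qed
  define A where "A = {g\<in>G. g s = 0}"
  have Glin: "\<forall>g\<in>G. linear g" using G(2) by blast
  have L: "f v = f s * (s \<bullet> v)" if v: "\<forall>g\<in>A. g v = 0" for v
  proof -
    define v' where "v' = v - (s \<bullet> v) *\<^sub>R s"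
    have "\<forall>g\<in>G. g s = 0 \<longrightarrow> g v' = 0"
      using v Glin unfolding A_def v'_def by (auto simp: linear_diff linear_scale)
    moreover have "v' \<bullet> s = 0"
    proof -
      have "s \<bullet> s = 1" using s(2) by (simp add: norm_eq_sqrt_inner)
      then show ?thesis unfolding v'_def by (simp add: inner_diff_left inner_diff_right inner_commute)
    qed
    ultimately have "f v' = 0" by (intro perturb[OF G(1) Glin assms(4) G(3) s _ _ lneg hom]) auto
    then show ?thesis unfolding v'_def using assms(4) by (simp add: linear_diff linear_scale)
  qed
  have Afin: "finite A" unfolding A_def using G(1) by simp
  have Tq: "grad ` A \<subseteq> qv B" using grad_q G(2) unfolding A_def by auto
  obtain E where E: "finite E" "E \<subseteq> qv B" "0 \<notin> E" "pairwise orthogonal E" "span E = span (grad ` A)"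
    using gs[OF finite_imageI[OF Afin] Tq Binner] by blast
  define w where "w = grad f"
  define p where "p = (\<Sum>e\<in>E. ((w \<bullet> e) / (e \<bullet> e)) *\<^sub>R e)"
  define d where "d = (w - f s *\<^sub>R s) - p"
  have s_orth: "orthogonal s e" if "e \<in> E" for e
  proof (rule orthogonal_to_span)
    have "e \<in> span E" by (rule span_base[OF that])
    then show "e \<in> span (grad ` A)" using E(5) by simp
    fix y assume "y \<in> grad ` A"
    then obtain g where g: "g \<in> A" "y = grad g" by auto
    have "linear g" using Glin g(1) unfolding A_def by blast
    then have "grad g \<bullet> s = g s" using grad_rep[of g s] by simp
    also have "\<dots> = 0" using g(1) unfolding A_def by auto
    finally show "orthogonal s y" using g(2) by (simp add: orthogonal_def inner_commute)
  qed
  have d_orth: "orthogonal d e" if "e \<in> E" for e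
  proof -
    have ee: "e \<bullet> e \<noteq> 0" using that E(3) by auto
    have "p \<bullet> e = w \<bullet> e"
      unfolding p_def using orth_sum_inner[OF E(1,4) that, of "\<lambda>e. w \<bullet> e"] ee by simp
    moreover have "s \<bullet> e = 0" using s_orth[OF that] by (simp add: orthogonal_def)
    ultimately show ?thesis unfolding d_def orthogonal_def
      by (simp add: inner_diff_left)
  qed
  have d_orth_span: "orthogonal d x" if "x \<in> span E" for x
    using orthogonal_to_span[OF that d_orth] .
  have gd: "\<forall>g\<in>A. g d = 0"
  proof
    fix g assume g: "g \<in> A"
    have "grad g \<in> span (grad ` A)" by (rule span_base) (use g in blast)
    then have "grad g \<in> span E" using E(5) by simp
    then have "orthogonal d (grad g)" by (rule d_orth_span)
    moreover have "linear g" using Glin g(1) unfolding A_def by blast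
    then have "g d = grad g \<bullet> d" using grad_rep[of g d] by simp
    ultimately show "g d = 0" by (simp add: orthogonal_def inner_commute)
  qed
  have fd: "f d = f s * (s \<bullet> d)" by (rule L[OF gd])
  have "p \<in> span E" unfolding p_def by (intro span_sum span_scale span_base)
  then have "orthogonal d p" by (rule d_orth_span)
  then have pd: "p \<bullet> d = 0" by (simp add: orthogonal_def inner_commute)
  have wd: "w \<bullet> d = f d" unfolding w_def using grad_rep[OF assms(4), of d] by simp
  have "d \<bullet> d = (w - f s *\<^sub>R s) \<bullet> d - p \<bullet> d" unfolding d_def by (simp add: inner_diff_left)
  also have "\<dots> = 0" using pd wd fd by (simp add: inner_diff_left)
  finally have "d = 0" by simp
  then have ls: "f s *\<^sub>R s = w - p" unfolding d_def by (simp add: algebra_simps)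
  have wq: "w \<in> qv B" unfolding w_def using grad_q assms(4,5) by blast
  have pq: "p \<in> qv B" unfolding p_def
  proof (intro qv_sum qv_scale)
    fix e assume e: "e \<in> E"
    then have eq: "e \<in> qv B" using E(2) by auto
    show "e \<in> qv B" by (rule eq)
    show "w \<bullet> e / (e \<bullet> e) \<in> \<rat>" using qv_inner[OF Binner wq eq] qv_inner[OF Binner eq eq]
      by (rule Rats_divide)
  qed
  obtain D :: nat where D: "D > 0" "real D *\<^sub>R (w - p) \<in> zv B"
    using qv_denom[OF fin qv_diff[OF wq pq]] by blast
  define m1 where "m1 = of_int (-1) *\<^sub>R (real D *\<^sub>R (w - p))"
  have m1M: "m1 \<in> M" unfolding m1_def M by (rule zv_scale[OF D(2)])
  have m1s: "m1 = (- (real D * f s)) *\<^sub>R s" unfolding m1_def ls[symmetric] by simp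
  have t1: "- (real D * f s) > 0" using D(1) lneg by (simp add: mult_pos_neg)
  have m1ne: "m1 \<noteq> 0" using m1s t1 sne D(1) lneg by simp
  show ?thesis by (rule ray_unique[OF fin B(1) M m1M m1ne m1s t1])
qed

end
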